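(* Let $X$ be a $k$-regular graph on $n$ vertices which may have loops (no multiple edges), where each loop contributes $1$ to the degree, and let $\tau$ be the least eigenvalue of its adjacency matrix $A$; assume $k>\tau$ (i.e. $A$ is not a scalar matrix). For any independent set $S$ of size $s$ containing $s_1$ vertices with loops, \[ s\le n\,\frac{-\tau+\sqrt{\tau^2+4s_1\frac{k-\tau}{n}}}{2(k-\tau)}. \]
   Context: The adjacency matrix has $A_{ii}=1$ if vertex $i$ carries a loop and $0$ otherwise, and $A_{ij}=1$ for adjacent distinct $i,j$. An independent set is a set of vertices no two distinct members of which are adjacent; looped vertices may belong to it. *)

theory Defs
  imports "Jordan_Normal_Form.Char_Poly"
begin

text \<open>Graph on vertex set {0..<n}, given by a symmetric adjacency relation E;
  E i i means vertex i carries a loop. Adjacency matrix: A_ij = 1 iff E i j.\<close>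

definition adj_mat :: "nat \<Rightarrow> (nat \<Rightarrow> nat \<Rightarrow> bool) \<Rightarrow> real mat" where
  "adj_mat n E = mat n n (\<lambda>(i, j). if E i j then 1 else 0)"

definition least_eigenvalue :: "real mat \<Rightarrow> real \<Rightarrow> bool" where
  "least_eigenvalue A \<tau> \<longleftrightarrow> eigenvalue A \<tau> \<and> (\<forall>\<mu>. eigenvalue A \<mu> \<longrightarrow> \<tau> \<le> \<mu>)"

end

theory Submission
  imports Defs "HOL-Analysis.Function_Topology"
begin

definition Qf :: "nat \<Rightarrow> (nat \<Rightarrow> nat \<Rightarrow> real) \<Rightarrow> (nat \<Rightarrow> real) \<Rightarrow> real" where
  "Qf n M x = (\<Sum>i<n. \<Sum>j<n. M i j * x i * x j)"

lemma exists_min: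
  fixes M :: "nat \<Rightarrow> nat \<Rightarrow> real" assumes n: "n > 0"
  shows "\<exists>v. (\<Sum>i<n. v i ^ 2) = 1 \<and> (\<forall>x. (\<Sum>i<n. x i ^ 2) = 1 \<longrightarrow> Qf n M v \<le> Qf n M x)"
proof -
  define S where "S = (\<lambda>i::nat. if i < n then {-1..1::real} else {0})"
  define K where "K = PiE UNIV S"
  have "compactin (product_topology (\<lambda>i. euclideanreal) UNIV) K"
    unfolding K_def by (subst compactin_PiE) (auto simp: S_def)
  then have cK: "compact K" by (simp add: euclidean_product_topology)
  define Sph where "Sph = K \<inter> {x. (\<Sum>i<n. x i ^ 2) = 1}"
  have cont: "continuous_on UNIV (\<lambda>x::nat\<Rightarrow>real. x i)" for i by simp
  have "closed {x::nat\<Rightarrow>real. (\<Sum>i<n. x i ^ 2) = 1}"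
    by (intro closed_Collect_eq continuous_intros continuous_on_product_then_coordinatewise continuous_on_id)
  then have cS: "compact Sph" unfolding Sph_def using cK by (simp add: compact_Int_closed)
  have e0: "(\<lambda>i. if i = 0 then 1 else 0) \<in> Sph" using n
    by (auto simp: Sph_def K_def S_def PiE_def extensional_def if_distrib[where f="\<lambda>x. x^2"] cong: if_cong)
  have cQ: "continuous_on Sph (Qf n M)" unfolding Qf_def
    by (intro continuous_intros continuous_on_product_then_coordinatewise continuous_on_id)
  obtain v where v: "v \<in> Sph" and vmin: "\<And>y. y \<in> Sph \<Longrightarrow> Qf n M v \<le> Qf n M y"
    using continuous_attains_inf[OF cS _ cQ] e0 by blast
  show ?thesis
  proof (intro exI conjI allI impI)
    show "(\<Sum>i<n. v i ^ 2) = 1" using v by (simp add: Sph_def)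
    fix x :: "nat \<Rightarrow> real" assume x: "(\<Sum>i<n. x i ^ 2) = 1"
    define x' where "x' = (\<lambda>i. if i < n then x i else 0)"
    have "x i ^ 2 \<le> 1" if "i < n" for i
    proof -
      have "x i ^ 2 \<le> (\<Sum>i<n. x i ^ 2)" by (rule member_le_sum) (use that in auto)
      then show ?thesis using x by simp
    qed
    then have "\<bar>x i\<bar> \<le> 1" if "i < n" for i using that abs_le_square_iff[of "x i" 1] by simp
    then have "x' \<in> Sph" using x by (auto simp: Sph_def K_def S_def x'_def abs_le_iff)
    moreover have "Qf n M x' = Qf n M x" by (simp add: Qf_def x'_def)
    ultimately show "Qf n M v \<le> Qf n M x" using vmin by metis
  qed
qed

lemma Qf_scale: "Qf n M (\<lambda>i. c * x i) = c^2 * Qf n M x"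
  unfolding Qf_def by (simp add: sum_distrib_left power2_eq_square algebra_simps)

lemma Qf_homog:
  fixes m :: real
  assumes vmin: "\<forall>x. (\<Sum>i<n. x i ^ 2) = 1 \<longrightarrow> m \<le> Qf n M x"
  shows "m * (\<Sum>i<n. x i ^ 2) \<le> Qf n M x"
proof (cases "(\<Sum>i<n. x i ^ 2) = 0")
  case True
  then have "\<forall>i\<in>{..<n}. x i ^ 2 = 0" by (subst sum_nonneg_eq_0_iff[symmetric]) auto
  then have "Qf n M x = 0" unfolding Qf_def by auto
  then show ?thesis using True by simp
next
  case False
  define N where "N = (\<Sum>i<n. x i ^ 2)"
  have Np: "N > 0" using False unfolding N_def by (metis less_eq_real_def sum_nonneg zero_le_power2)
  define y where "y = (\<lambda>i. (1 / sqrt N) * x i)"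
  have "(\<Sum>i<n. y i ^ 2) = (\<Sum>i<n. x i ^ 2) / N"
    unfolding y_def using Np by (simp add: power_divide sum_divide_distrib)
  then have "(\<Sum>i<n. y i ^ 2) = 1" using Np N_def by simp
  then have "m \<le> Qf n M y" using vmin by blast
  also have "Qf n M y = Qf n M x / N" unfolding y_def Qf_scale using Np
    by (simp add: power_divide)
  finally show ?thesis using Np unfolding N_def[symmetric] by (simp add: field_simps)
qed

lemma Qf_expand:
  assumes sym: "\<forall>i<n. \<forall>j<n. M i j = M j i"
  shows "Qf n M (\<lambda>i. v i + t * w i) = Qf n M v + 2 * t * (\<Sum>i<n. w i * (\<Sum>j<n. M i j * v j)) + t^2 * Qf n M w"
proof -
  have sw: "(\<Sum>i<n. \<Sum>j<n. M i j * v i * w j) = (\<Sum>i<n. \<Sum>j<n. M i j * w i * v j)"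
    apply (subst sum.swap) using sym by (auto intro!: sum.cong simp: mult_ac)
  have "Qf n M (\<lambda>i. v i + t * w i) = (\<Sum>i<n. \<Sum>j<n. M i j * v i * v j)
     + t * (\<Sum>i<n. \<Sum>j<n. M i j * w i * v j) + t * (\<Sum>i<n. \<Sum>j<n. M i j * v i * w j)
     + t^2 * (\<Sum>i<n. \<Sum>j<n. M i j * w i * w j)"
    unfolding Qf_def by (simp add: sum_distrib_left sum.distrib[symmetric] power2_eq_square algebra_simps)
  also have "\<dots> = Qf n M v + 2 * t * (\<Sum>i<n. w i * (\<Sum>j<n. M i j * v j)) + t^2 * Qf n M w"
    unfolding sw Qf_def by (simp add: sum_distrib_left algebra_simps)
  finally show ?thesis .
qed

lemma rayleigh:
  fixes M :: "nat \<Rightarrow> nat \<Rightarrow> real" assumes n: "n > 0" and sym: "\<forall>i<n. \<forall>j<n. M i j = M j i"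
  shows "\<exists>v m. (\<Sum>i<n. v i ^ 2) = 1 \<and> (\<forall>i<n. (\<Sum>j<n. M i j * v j) = m * v i)
     \<and> (\<forall>x. m * (\<Sum>i<n. x i ^ 2) \<le> Qf n M x)"
proof -
  obtain v where v1: "(\<Sum>i<n. v i ^ 2) = 1" and vmin: "\<forall>x. (\<Sum>i<n. x i ^ 2) = 1 \<longrightarrow> Qf n M v \<le> Qf n M x"
    using exists_min[OF n] by blast
  define m where "m = Qf n M v"
  have hom: "m * (\<Sum>i<n. x i ^ 2) \<le> Qf n M x" for x
    using Qf_homog[where m=m and n=n and M=M and x=x] vmin unfolding m_def by blast
  define w where "w = (\<lambda>i. (\<Sum>j<n. M i j * v j) - m * v i)"
  define a where "a = (\<Sum>i<n. w i ^ 2)"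
  define c where "c = Qf n M w - m * (\<Sum>i<n. w i ^ 2)"
  have key: "0 \<le> 2 * t * a + t^2 * c" for t
  proof -
    have "m * (\<Sum>i<n. (v i + t * w i) ^ 2) \<le> Qf n M (\<lambda>i. v i + t * w i)" by (rule hom)
    also have "\<dots> = m + 2 * t * (\<Sum>i<n. w i * (\<Sum>j<n. M i j * v j)) + t^2 * Qf n M w"
      using Qf_expand[OF sym] m_def by simp
    finally have A: "m * (\<Sum>i<n. (v i + t * w i) ^ 2) \<le> m + 2 * t * (\<Sum>i<n. w i * (\<Sum>j<n. M i j * v j)) + t^2 * Qf n M w" .
    have B: "(\<Sum>i<n. (v i + t * w i) ^ 2) = 1 + 2 * t * (\<Sum>i<n. v i * w i) + t^2 * (\<Sum>i<n. w i ^ 2)"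
      using v1 by (simp add: power2_eq_square sum.distrib sum_distrib_left algebra_simps)
    have C: "(\<Sum>i<n. w i * (\<Sum>j<n. M i j * v j)) = a + m * (\<Sum>i<n. v i * w i)"
    proof -
      have "w i * (\<Sum>j<n. M i j * v j) = w i ^ 2 + m * (v i * w i)" for i
        by (simp add: w_def power2_eq_square algebra_simps)
      then show ?thesis by (simp add: a_def sum.distrib sum_distrib_left)
    qed
    show ?thesis using A unfolding B C c_def by (simp add: algebra_simps)
  qed
  have a0: "a = 0"
  proof (rule ccontr)
    assume "a \<noteq> 0"
    then have ap: "a > 0" unfolding a_def by (metis less_eq_real_def sum_nonneg zero_le_power2)
    define t where "t = - a / (\<bar>c\<bar> + 1)"
    have "t^2 * c \<le> t^2 * \<bar>c\<bar>" by (simp add: mult_left_mono)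
    also have "t^2 * \<bar>c\<bar> = a^2 * \<bar>c\<bar> / (\<bar>c\<bar>+1)^2" unfolding t_def by (simp add: power_divide)
    also have "\<dots> = (a^2 / (\<bar>c\<bar>+1)) * (\<bar>c\<bar> / (\<bar>c\<bar>+1))" by (simp add: power2_eq_square)
    also have "\<dots> < (a^2 / (\<bar>c\<bar>+1)) * 1"
      by (rule mult_strict_left_mono) (use ap in auto)
    finally have X: "t^2 * c < a^2 / (\<bar>c\<bar>+1)" by simp
    have Y: "2 * t * a = - 2 * (a^2 / (\<bar>c\<bar>+1))" unfolding t_def by (simp add: power2_eq_square)
    have "a^2 / (\<bar>c\<bar>+1) > 0" using ap by simp
    then have "2 * t * a + t^2 * c < 0" using X Y by linarith
    then show False using key[of t] by simp
  qed
  then have "\<forall>i\<in>{..<n}. w i ^ 2 = 0" unfolding a_def by (subst sum_nonneg_eq_0_iff[symmetric]) auto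
  then have "\<forall>i<n. (\<Sum>j<n. M i j * v j) = m * v i" unfolding w_def by auto
  then show ?thesis using v1 hom by blast
qed

lemma sum_ind: "S \<subseteq> {..<n::nat} \<Longrightarrow> (\<Sum>i<n. (if i\<in>S then f i else 0)) = sum f S"
proof -
  assume "S \<subseteq> {..<n}"
  then have "{..<n} \<inter> S = S" by blast
  moreover have "sum f ({..<n} \<inter> S) = (\<Sum>i<n. (if i\<in>S then f i else 0))"
    by (rule sum.inter_restrict) simp
  ultimately show ?thesis by simp
qed
lemma sum_card: "finite A \<Longrightarrow> (\<Sum>j\<in>A. (if P j then 1 else 0 :: real)) = real (card {j\<in>A. P j})"
  by (simp add: sum.inter_filter[symmetric])
lemma Qf_shift: "Qf n M (\<lambda>i. f i - c) = (\<Sum>i<n. \<Sum>j<n. M i j * f i * f j) - c * (\<Sum>i<n. \<Sum>j<n. M i j * f i)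
      - c * (\<Sum>i<n. \<Sum>j<n. M i j * f j) + c^2 * (\<Sum>i<n. \<Sum>j<n. M i j)"
proof -
  have e: "M i j * (f i - c) * (f j - c) = M i j * f i * f j - c * (M i j * f i) - c * (M i j * f j) + c^2 * M i j" for i j
    by (simp add: power2_eq_square algebra_simps)
  have "Qf n M (\<lambda>i. f i - c) = (\<Sum>i<n. \<Sum>j<n. M i j * f i * f j - c * (M i j * f i) - c * (M i j * f j) + c^2 * M i j)"
    unfolding Qf_def e ..
  also have "\<dots> = (\<Sum>i<n. \<Sum>j<n. M i j * f i * f j) - (\<Sum>i<n. \<Sum>j<n. c * (M i j * f i))
      - (\<Sum>i<n. \<Sum>j<n. c * (M i j * f j)) + (\<Sum>i<n. \<Sum>j<n. c^2 * M i j)"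
    by (simp only: sum.distrib sum_subtractf)
  also have "\<dots> = (\<Sum>i<n. \<Sum>j<n. M i j * f i * f j) - c * (\<Sum>i<n. \<Sum>j<n. M i j * f i)
      - c * (\<Sum>i<n. \<Sum>j<n. M i j * f j) + c^2 * (\<Sum>i<n. \<Sum>j<n. M i j)"
    by (simp only: sum_distrib_left)
  finally show ?thesis .
qed

lemma fin:
  fixes s s1 c \<tau> :: real and n k :: nat
  assumes main: "\<tau> * (s - 2 * c * s + real n * c^2) \<le> s1 - 2 * c * real k * s + c^2 * real k * real n"
  and c_def: "c = s / real n" and n: "n > 0" and k_gt: "real k > \<tau>" and s1nn: "s1 \<ge> 0"
  shows "s \<le> real n *
    (- \<tau> + sqrt (\<tau>\<^sup>2 + 4 * s1 * ((real k - \<tau>) / real n)))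
    / (2 * (real k - \<tau>))"
proof -
  define d where "d = real k - \<tau>"
  have dp: "d > 0" using k_gt d_def by simp
  have np: "real n > 0" using n by simp
  have q: "d * s^2 / real n + \<tau> * s - s1 \<le> 0"
  proof -
    have e1: "\<tau> * (s - 2 * c * s + real n * c^2) = \<tau> * (s - s^2 / real n)"
      unfolding c_def using np by (simp add: power2_eq_square field_simps)
    have e2: "s1 - 2 * c * real k * s + c^2 * real k * real n = s1 - real k * s^2 / real n"
      unfolding c_def using np by (simp add: power2_eq_square field_simps)
    have "\<tau> * (s - s^2 / real n) \<le> s1 - real k * s^2 / real n" using main unfolding e1 e2 .
    then show ?thesis unfolding d_def by (simp add: algebra_simps diff_divide_distrib)
  qed
  define R where "R = \<tau>\<^sup>2 + 4 * s1 * (d / real n)"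
  have key: "2 * d * s / real n + \<tau> \<le> sqrt R"
  proof (cases "2 * d * s / real n + \<tau> < 0")
    case True
    have "R \<ge> 0" unfolding R_def using s1nn dp np by (intro add_nonneg_nonneg) auto
    then show ?thesis using True by (meson less_le_trans less_le real_sqrt_ge_zero)
  next
    case False
    have "(2 * d * s / real n + \<tau>)^2 = \<tau>^2 + (4 * d / real n) * (d * s^2 / real n + \<tau> * s)"
      using np by (simp add: power2_eq_square field_simps)
    also have "\<dots> \<le> \<tau>^2 + (4 * d / real n) * s1"
      using q dp np by (intro add_left_mono mult_left_mono) auto
    also have "\<dots> = R" unfolding R_def by simp
    finally show ?thesis by (rule real_le_rsqrt)
  qed
  have "s = real n * (2 * d * s / real n) / (2 * d)" using np dp by simp
  also have "\<dots> \<le> real n * (- \<tau> + sqrt R) / (2 * d)"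
    using key np dp by (intro divide_right_mono mult_left_mono) auto
  finally show ?thesis unfolding R_def d_def by simp
qed

theorem corollary3p3:
  fixes n k :: nat and E :: "nat \<Rightarrow> nat \<Rightarrow> bool" and S :: "nat set" and \<tau> :: real
  assumes sym: "\<forall>i<n. \<forall>j<n. E i j = E j i"
    and regular: "\<forall>i<n. card {j. j < n \<and> E i j} = k"
    and least: "least_eigenvalue (adj_mat n E) \<tau>"
    and k_gt: "real k > \<tau>"
    and S_sub: "S \<subseteq> {..<n}"
    and indep: "\<forall>i\<in>S. \<forall>j\<in>S. i \<noteq> j \<longrightarrow> \<not> E i j"
  shows "real (card S) \<le> real n *
    (- \<tau> + sqrt (\<tau>\<^sup>2 + 4 * real (card {i\<in>S. E i i}) * ((real k - \<tau>) / real n)))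
    / (2 * (real k - \<tau>))"
proof -
  define A where "A = adj_mat n E"
  have A: "A \<in> carrier_mat n n" by (simp add: A_def adj_mat_def)
  have n: "n > 0"
  proof (rule ccontr)
    assume "\<not> n > 0"
    then have "n = 0" by simp
    then show False using least unfolding least_eigenvalue_def eigenvalue_def eigenvector_def
      by (auto simp: adj_mat_def)
  qed
  define M where "M = (\<lambda>i j. if E i j then 1 else 0 :: real)"
  have Msym: "\<forall>i<n. \<forall>j<n. M i j = M j i" using sym by (simp add: M_def)
  obtain v m where v1: "(\<Sum>i<n. v i ^ 2) = 1" and ev: "\<forall>i<n. (\<Sum>j<n. M i j * v j) = m * v i"
    and hom: "\<forall>x. m * (\<Sum>i<n. x i ^ 2) \<le> Qf n M x"
    using rayleigh[OF n Msym] by blast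
  have "eigenvector A (vec n v) m"
    unfolding eigenvector_def
  proof (intro conjI)
    show "vec n v \<in> carrier_vec (dim_row A)" using A by simp
    show "vec n v \<noteq> 0\<^sub>v (dim_row A)"
    proof
      assume "vec n v = 0\<^sub>v (dim_row A)"
      then have "\<forall>i<n. v i = 0" using A by (metis carrier_matD(1) index_vec index_zero_vec(1))
      then show False using v1 by simp
    qed
    show "A *\<^sub>v vec n v = m \<cdot>\<^sub>v vec n v"
    proof (rule eq_vecI)
      fix i assume "i < dim_vec (m \<cdot>\<^sub>v vec n v)"
      then have i: "i < n" by simp
      have "(A *\<^sub>v vec n v) $ i = (\<Sum>j<n. M i j * v j)"
        using A i by (simp add: A_def adj_mat_def scalar_prod_def M_def lessThan_atLeast0)
      then show "(A *\<^sub>v vec n v) $ i = (m \<cdot>\<^sub>v vec n v) $ i" using ev i by simp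
    qed (use A in simp)
  qed
  then have "\<tau> \<le> m" using least unfolding least_eigenvalue_def eigenvalue_def A_def by blast
  then have rq: "\<tau> * (\<Sum>i<n. x i ^ 2) \<le> Qf n M x" for x
  proof -
    have "\<tau> * (\<Sum>i<n. x i ^ 2) \<le> m * (\<Sum>i<n. x i ^ 2)"
      using \<open>\<tau> \<le> m\<close> by (intro mult_right_mono) (auto intro: sum_nonneg)
    then show ?thesis using hom by (meson order_trans)
  qed
  define s where "s = real (card S)"
  define s1 where "s1 = real (card {i\<in>S. E i i})"
  define c where "c = s / real n"
  define ind where "ind = (\<lambda>i. if i \<in> S then 1 else 0 :: real)"
  define x where "x = (\<lambda>i. ind i - c)"
  have finS: "finite S" using S_sub finite_subset by blast
  have F1: "(\<Sum>j<n. M i j) = real k" if "i < n" for i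
    using regular that sum_card[where P="\<lambda>j. E i j" and A="{..<n}"] by (simp add: M_def)
  have F2: "(\<Sum>i<n. \<Sum>j<n. M i j * ind i * ind j) = s1"
  proof -
    have "(\<Sum>i<n. \<Sum>j<n. M i j * ind i * ind j) = (\<Sum>i<n. if i\<in>S then (\<Sum>j<n. if j\<in>S then M i j else 0) else 0)"
      unfolding ind_def by (auto intro!: sum.cong)
    also have "\<dots> = (\<Sum>i\<in>S. \<Sum>j<n. if j\<in>S then M i j else 0)" using S_sub by (rule sum_ind)
    also have "\<dots> = (\<Sum>i\<in>S. \<Sum>j\<in>S. M i j)" using S_sub by (simp add: sum_ind)
    also have "\<dots> = (\<Sum>i\<in>S. M i i)"
    proof (rule sum.cong[OF refl])
      fix i assume i: "i \<in> S"
      have "(\<Sum>j\<in>S. M i j) = M i i + (\<Sum>j\<in>S - {i}. M i j)" using i finS by (simp add: sum.remove)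
      also have "(\<Sum>j\<in>S - {i}. M i j) = 0" using indep i by (auto simp: M_def)
      finally show "(\<Sum>j\<in>S. M i j) = M i i" by simp
    qed
    also have "\<dots> = s1" unfolding s1_def M_def by (rule sum_card[OF finS])
    finally show ?thesis .
  qed
  have F3: "(\<Sum>i<n. \<Sum>j<n. M i j * ind i) = real k * s"
  proof -
    have "(\<Sum>i<n. \<Sum>j<n. M i j * ind i) = (\<Sum>i<n. ind i * (\<Sum>j<n. M i j))"
      by (simp add: sum_distrib_left mult_ac)
    also have "\<dots> = (\<Sum>i<n. ind i * real k)" using F1 by simp
    also have "\<dots> = real k * s" unfolding ind_def s_def using S_sub
      by (simp add: sum_ind if_distrib[where f="\<lambda>x. x * _"] cong: if_cong)
    finally show ?thesis .
  qed
  have F4: "(\<Sum>i<n. \<Sum>j<n. M i j * ind j) = real k * s"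
  proof -
    have "(\<Sum>i<n. \<Sum>j<n. M i j * ind j) = (\<Sum>j<n. \<Sum>i<n. M i j * ind j)" by (rule sum.swap)
    also have "\<dots> = (\<Sum>j<n. \<Sum>i<n. M j i * ind j)" using Msym by (auto intro!: sum.cong)
    finally show ?thesis using F3 by simp
  qed
  have F5: "(\<Sum>i<n. \<Sum>j<n. M i j) = real k * real n" using F1 by simp
  have "Qf n M x = (\<Sum>i<n. \<Sum>j<n. M i j * ind i * ind j) - c * (\<Sum>i<n. \<Sum>j<n. M i j * ind i)
      - c * (\<Sum>i<n. \<Sum>j<n. M i j * ind j) + c^2 * (\<Sum>i<n. \<Sum>j<n. M i j)"
    unfolding x_def by (rule Qf_shift)
  also have "\<dots> = s1 - 2 * c * real k * s + c^2 * real k * real n" unfolding F2 F3 F4 F5 by simp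
  finally have Qx: "Qf n M x = s1 - 2 * c * real k * s + c^2 * real k * real n" .
  have "(\<Sum>i<n. x i ^ 2) = (\<Sum>i<n. ind i) - 2 * c * (\<Sum>i<n. ind i) + real n * c^2"
  proof -
    have "x i ^ 2 = ind i - 2 * c * ind i + c^2" for i
      by (simp add: x_def ind_def power2_eq_square algebra_simps)
    then show ?thesis by (simp add: sum.distrib sum_subtractf sum_distrib_left)
  qed
  also have "(\<Sum>i<n. ind i) = s" unfolding ind_def s_def using S_sub by (simp add: sum_ind)
  finally have Nx: "(\<Sum>i<n. x i ^ 2) = s - 2 * c * s + real n * c^2" .
  have main: "\<tau> * (s - 2 * c * s + real n * c^2) \<le> s1 - 2 * c * real k * s + c^2 * real k * real n"
    using rq[of x] unfolding Qx Nx .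
  show ?thesis using fin[OF main c_def n k_gt] unfolding s_def s1_def by simp
qed
end
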